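(* For integers $\ell,k$ with $1\le\ell\le 3$ and $k\ge\ell$, $\overline{\alpha}(\{1,2k,2k+2\ell\})=\frac{2k}{4k+2\ell}$.
   Context: For a finite set $S$ of positive integers, the distance graph $G(S)$ has vertex set $\mathbb{Z}$, with $i,j$ adjacent iff $|i-j|\in S$. The density of $A\subseteq\mathbb{Z}$ is $\delta(A)=\limsup_{N\to\infty}\frac{|A\cap[-N,N]|}{2N+1}$, and the independence ratio $\overline{\alpha}(S)$ is the supremum of $\delta(A)$ over independent sets $A$ of $G(S)$. *)

theory Defs
  imports "HOL-Analysis.Analysis"
begin

text \<open>Independent sets of the distance graph G(S) on the integers:
  i, j adjacent iff |i - j| \<in> S.\<close>
definition dist_indep :: "int set \<Rightarrow> int set \<Rightarrow> bool" where
  "dist_indep S A \<longleftrightarrow> (\<forall>i\<in>A. \<forall>j\<in>A. \<bar>i - j\<bar> \<notin> S)"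

definition upper_density :: "int set \<Rightarrow> ereal" where
  "upper_density A = limsup (\<lambda>N::nat. ereal (real (card (A \<inter> {- int N .. int N})) / (2 * real N + 1)))"

definition indep_ratio :: "int set \<Rightarrow> ereal" where
  "indep_ratio S = (SUP A \<in> {A. dist_indep S A}. upper_density A)"

end

theory Submission
  imports Defs "HOL-Real_Asymp.Real_Asymp"
begin

definition wc :: "int \<Rightarrow> int \<Rightarrow> int \<Rightarrow> int \<Rightarrow> int \<Rightarrow> int \<Rightarrow> int \<Rightarrow> int" where
  "wc t1 t2 t3 t4 t5 i L = (if i < t1 \<and> t1 \<le> i + L then 1 else 0) + (if i < t2 \<and> t2 \<le> i + L then 1 else 0)
     + (if i < t3 \<and> t3 \<le> i + L then 1 else 0) + (if i < t4 \<and> t4 \<le> i + L then 1 else 0) + (if i < t5 \<and> t5 \<le> i + L then 1 else 0)"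

lemma tau_lemma:
  fixes k l t1 t2 t3 t4 t5 :: int
  assumes hl: "l = 1 \<or> l = 2 \<or> l = 3" and hk: "l \<le> k"
    and ht: "1 \<le> t1" "t1 \<le> t2" "t2 \<le> t3" "t3 \<le> t4" "t4 \<le> t5" "t5 \<le> 2*k+1"
    and hE: "wc t1 t2 t3 t4 t5 0 (2*k) \<le> 2*l - 1"
    and W: "\<And>i L. 0 \<le> i \<Longrightarrow> i + L \<le> 2*k \<Longrightarrow> wc t1 t2 t3 t4 t5 i L \<noteq> 2*k - 2*L \<and> wc t1 t2 t3 t4 t5 i L \<noteq> 2*k + 2*l - 2*L"
  shows False
proof -
  have c1: "l \<noteq> 1"
  proof
    assume hl0: "l = 1"
    have i0: "0 \<le> ((-1) + (- k) + t5) \<longrightarrow> ((-1) + (- k) + t5) + (k + (0)) \<le> 2*k \<longrightarrow> wc t1 t2 t3 t4 t5 (((-1) + (- k) + t5)) (k + (0)) \<noteq> 2*k - 2*(k + (0)) \<and> wc t1 t2 t3 t4 t5 (((-1) + (- k) + t5)) (k + (0)) \<noteq> 2*k + 2*l - 2*(k + (0))"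
      using W[of "((-1) + (- k) + t5)" "k + (0)"] by blast
    have i1: "0 \<le> ((-1) + (- k) + t1) \<longrightarrow> ((-1) + (- k) + t1) + (k + (0)) \<le> 2*k \<longrightarrow> wc t1 t2 t3 t4 t5 (((-1) + (- k) + t1)) (k + (0)) \<noteq> 2*k - 2*(k + (0)) \<and> wc t1 t2 t3 t4 t5 (((-1) + (- k) + t1)) (k + (0)) \<noteq> 2*k + 2*l - 2*(k + (0))"
      using W[of "((-1) + (- k) + t1)" "k + (0)"] by blast
    have i2: "0 \<le> 0 \<longrightarrow> 0 + (k + (1)) \<le> 2*k \<longrightarrow> wc t1 t2 t3 t4 t5 (0) (k + (1)) \<noteq> 2*k - 2*(k + (1)) \<and> wc t1 t2 t3 t4 t5 (0) (k + (1)) \<noteq> 2*k + 2*l - 2*(k + (1))"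
      using W[of "0" "k + (1)"] by blast
    have i3: "0 \<le> t1 \<longrightarrow> t1 + (k + (1)) \<le> 2*k \<longrightarrow> wc t1 t2 t3 t4 t5 (t1) (k + (1)) \<noteq> 2*k - 2*(k + (1)) \<and> wc t1 t2 t3 t4 t5 (t1) (k + (1)) \<noteq> 2*k + 2*l - 2*(k + (1))"
      using W[of "t1" "k + (1)"] by blast
    show False using i0 i1 i2 i3 hk ht hE hl0 unfolding wc_def by (smt (verit))
  qed
  have c2: "l \<noteq> 2"
  proof
    assume hl0: "l = 2"
    have i0: "0 \<le> ((- k) + t5) \<longrightarrow> ((- k) + t5) + (k + (-1)) \<le> 2*k \<longrightarrow> wc t1 t2 t3 t4 t5 (((- k) + t5)) (k + (-1)) \<noteq> 2*k - 2*(k + (-1)) \<and> wc t1 t2 t3 t4 t5 (((- k) + t5)) (k + (-1)) \<noteq> 2*k + 2*l - 2*(k + (-1))"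
      using W[of "((- k) + t5)" "k + (-1)"] by blast
    have i1: "0 \<le> (1 + (- k) + t3) \<longrightarrow> (1 + (- k) + t3) + (k + (-1)) \<le> 2*k \<longrightarrow> wc t1 t2 t3 t4 t5 ((1 + (- k) + t3)) (k + (-1)) \<noteq> 2*k - 2*(k + (-1)) \<and> wc t1 t2 t3 t4 t5 ((1 + (- k) + t3)) (k + (-1)) \<noteq> 2*k + 2*l - 2*(k + (-1))"
      using W[of "(1 + (- k) + t3)" "k + (-1)"] by blast
    have i2: "0 \<le> ((-1) + t2) \<longrightarrow> ((-1) + t2) + (k + (-1)) \<le> 2*k \<longrightarrow> wc t1 t2 t3 t4 t5 (((-1) + t2)) (k + (-1)) \<noteq> 2*k - 2*(k + (-1)) \<and> wc t1 t2 t3 t4 t5 (((-1) + t2)) (k + (-1)) \<noteq> 2*k + 2*l - 2*(k + (-1))"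
      using W[of "((-1) + t2)" "k + (-1)"] by blast
    have i3: "0 \<le> ((- k) + t3) \<longrightarrow> ((- k) + t3) + (k + (-1)) \<le> 2*k \<longrightarrow> wc t1 t2 t3 t4 t5 (((- k) + t3)) (k + (-1)) \<noteq> 2*k - 2*(k + (-1)) \<and> wc t1 t2 t3 t4 t5 (((- k) + t3)) (k + (-1)) \<noteq> 2*k + 2*l - 2*(k + (-1))"
      using W[of "((- k) + t3)" "k + (-1)"] by blast
    have i4: "0 \<le> t1 \<longrightarrow> t1 + (k + (0)) \<le> 2*k \<longrightarrow> wc t1 t2 t3 t4 t5 (t1) (k + (0)) \<noteq> 2*k - 2*(k + (0)) \<and> wc t1 t2 t3 t4 t5 (t1) (k + (0)) \<noteq> 2*k + 2*l - 2*(k + (0))"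
      using W[of "t1" "k + (0)"] by blast
    have i5: "0 \<le> t2 \<longrightarrow> t2 + (k + (0)) \<le> 2*k \<longrightarrow> wc t1 t2 t3 t4 t5 (t2) (k + (0)) \<noteq> 2*k - 2*(k + (0)) \<and> wc t1 t2 t3 t4 t5 (t2) (k + (0)) \<noteq> 2*k + 2*l - 2*(k + (0))"
      using W[of "t2" "k + (0)"] by blast
    have i6: "0 \<le> ((-1) + (- k) + t5) \<longrightarrow> ((-1) + (- k) + t5) + (k + (0)) \<le> 2*k \<longrightarrow> wc t1 t2 t3 t4 t5 (((-1) + (- k) + t5)) (k + (0)) \<noteq> 2*k - 2*(k + (0)) \<and> wc t1 t2 t3 t4 t5 (((-1) + (- k) + t5)) (k + (0)) \<noteq> 2*k + 2*l - 2*(k + (0))"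
      using W[of "((-1) + (- k) + t5)" "k + (0)"] by blast
    have i7: "0 \<le> ((-1) + (- k) + t1) \<longrightarrow> ((-1) + (- k) + t1) + (k + (0)) \<le> 2*k \<longrightarrow> wc t1 t2 t3 t4 t5 (((-1) + (- k) + t1)) (k + (0)) \<noteq> 2*k - 2*(k + (0)) \<and> wc t1 t2 t3 t4 t5 (((-1) + (- k) + t1)) (k + (0)) \<noteq> 2*k + 2*l - 2*(k + (0))"
      using W[of "((-1) + (- k) + t1)" "k + (0)"] by blast
    have i8: "0 \<le> ((-1) + t2) \<longrightarrow> ((-1) + t2) + (k + (1)) \<le> 2*k \<longrightarrow> wc t1 t2 t3 t4 t5 (((-1) + t2)) (k + (1)) \<noteq> 2*k - 2*(k + (1)) \<and> wc t1 t2 t3 t4 t5 (((-1) + t2)) (k + (1)) \<noteq> 2*k + 2*l - 2*(k + (1))"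
      using W[of "((-1) + t2)" "k + (1)"] by blast
    have i9: "0 \<le> ((-2) + (- k) + t5) \<longrightarrow> ((-2) + (- k) + t5) + (k + (1)) \<le> 2*k \<longrightarrow> wc t1 t2 t3 t4 t5 (((-2) + (- k) + t5)) (k + (1)) \<noteq> 2*k - 2*(k + (1)) \<and> wc t1 t2 t3 t4 t5 (((-2) + (- k) + t5)) (k + (1)) \<noteq> 2*k + 2*l - 2*(k + (1))"
      using W[of "((-2) + (- k) + t5)" "k + (1)"] by blast
    have i10: "0 \<le> ((-1) + (- k) + t2) \<longrightarrow> ((-1) + (- k) + t2) + (k + (1)) \<le> 2*k \<longrightarrow> wc t1 t2 t3 t4 t5 (((-1) + (- k) + t2)) (k + (1)) \<noteq> 2*k - 2*(k + (1)) \<and> wc t1 t2 t3 t4 t5 (((-1) + (- k) + t2)) (k + (1)) \<noteq> 2*k + 2*l - 2*(k + (1))"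
      using W[of "((-1) + (- k) + t2)" "k + (1)"] by blast
    have i11: "0 \<le> 0 \<longrightarrow> 0 + (k + (2)) \<le> 2*k \<longrightarrow> wc t1 t2 t3 t4 t5 (0) (k + (2)) \<noteq> 2*k - 2*(k + (2)) \<and> wc t1 t2 t3 t4 t5 (0) (k + (2)) \<noteq> 2*k + 2*l - 2*(k + (2))"
      using W[of "0" "k + (2)"] by blast
    have i12: "0 \<le> t1 \<longrightarrow> t1 + (k + (2)) \<le> 2*k \<longrightarrow> wc t1 t2 t3 t4 t5 (t1) (k + (2)) \<noteq> 2*k - 2*(k + (2)) \<and> wc t1 t2 t3 t4 t5 (t1) (k + (2)) \<noteq> 2*k + 2*l - 2*(k + (2))"
      using W[of "t1" "k + (2)"] by blast
    have i13: "0 \<le> t2 \<longrightarrow> t2 + (k + (2)) \<le> 2*k \<longrightarrow> wc t1 t2 t3 t4 t5 (t2) (k + (2)) \<noteq> 2*k - 2*(k + (2)) \<and> wc t1 t2 t3 t4 t5 (t2) (k + (2)) \<noteq> 2*k + 2*l - 2*(k + (2))"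
      using W[of "t2" "k + (2)"] by blast
    have i14: "0 \<le> t3 \<longrightarrow> t3 + (k + (2)) \<le> 2*k \<longrightarrow> wc t1 t2 t3 t4 t5 (t3) (k + (2)) \<noteq> 2*k - 2*(k + (2)) \<and> wc t1 t2 t3 t4 t5 (t3) (k + (2)) \<noteq> 2*k + 2*l - 2*(k + (2))"
      using W[of "t3" "k + (2)"] by blast
    show False using i0 i1 i2 i3 i4 i5 i6 i7 i8 i9 i10 i11 i12 i13 i14 hk ht hE hl0 unfolding wc_def by (smt (verit))
  qed
  have c3: "l \<noteq> 3"
  proof
    assume hl0: "l = 3"
    have i0: "0 \<le> (2 + k) \<longrightarrow> (2 + k) + (k + (-2)) \<le> 2*k \<longrightarrow> wc t1 t2 t3 t4 t5 ((2 + k)) (k + (-2)) \<noteq> 2*k - 2*(k + (-2)) \<and> wc t1 t2 t3 t4 t5 ((2 + k)) (k + (-2)) \<noteq> 2*k + 2*l - 2*(k + (-2))"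
      using W[of "(2 + k)" "k + (-2)"] by blast
    have i1: "0 \<le> (2 + (- k) + t4) \<longrightarrow> (2 + (- k) + t4) + (k + (-2)) \<le> 2*k \<longrightarrow> wc t1 t2 t3 t4 t5 ((2 + (- k) + t4)) (k + (-2)) \<noteq> 2*k - 2*(k + (-2)) \<and> wc t1 t2 t3 t4 t5 ((2 + (- k) + t4)) (k + (-2)) \<noteq> 2*k + 2*l - 2*(k + (-2))"
      using W[of "(2 + (- k) + t4)" "k + (-2)"] by blast
    have i2: "0 \<le> ((-1) + t2) \<longrightarrow> ((-1) + t2) + (k + (-2)) \<le> 2*k \<longrightarrow> wc t1 t2 t3 t4 t5 (((-1) + t2)) (k + (-2)) \<noteq> 2*k - 2*(k + (-2)) \<and> wc t1 t2 t3 t4 t5 (((-1) + t2)) (k + (-2)) \<noteq> 2*k + 2*l - 2*(k + (-2))"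
      using W[of "((-1) + t2)" "k + (-2)"] by blast
    have i3: "0 \<le> ((-1) + t1) \<longrightarrow> ((-1) + t1) + (k + (-2)) \<le> 2*k \<longrightarrow> wc t1 t2 t3 t4 t5 (((-1) + t1)) (k + (-2)) \<noteq> 2*k - 2*(k + (-2)) \<and> wc t1 t2 t3 t4 t5 (((-1) + t1)) (k + (-2)) \<noteq> 2*k + 2*l - 2*(k + (-2))"
      using W[of "((-1) + t1)" "k + (-2)"] by blast
    have i4: "0 \<le> (1 + (- k) + t5) \<longrightarrow> (1 + (- k) + t5) + (k + (-2)) \<le> 2*k \<longrightarrow> wc t1 t2 t3 t4 t5 ((1 + (- k) + t5)) (k + (-2)) \<noteq> 2*k - 2*(k + (-2)) \<and> wc t1 t2 t3 t4 t5 ((1 + (- k) + t5)) (k + (-2)) \<noteq> 2*k + 2*l - 2*(k + (-2))"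
      using W[of "(1 + (- k) + t5)" "k + (-2)"] by blast
    have i5: "0 \<le> 0 \<longrightarrow> 0 + (k + (-1)) \<le> 2*k \<longrightarrow> wc t1 t2 t3 t4 t5 (0) (k + (-1)) \<noteq> 2*k - 2*(k + (-1)) \<and> wc t1 t2 t3 t4 t5 (0) (k + (-1)) \<noteq> 2*k + 2*l - 2*(k + (-1))"
      using W[of "0" "k + (-1)"] by blast
    have i6: "0 \<le> t1 \<longrightarrow> t1 + (k + (-1)) \<le> 2*k \<longrightarrow> wc t1 t2 t3 t4 t5 (t1) (k + (-1)) \<noteq> 2*k - 2*(k + (-1)) \<and> wc t1 t2 t3 t4 t5 (t1) (k + (-1)) \<noteq> 2*k + 2*l - 2*(k + (-1))"
      using W[of "t1" "k + (-1)"] by blast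
    have i7: "0 \<le> t2 \<longrightarrow> t2 + (k + (-1)) \<le> 2*k \<longrightarrow> wc t1 t2 t3 t4 t5 (t2) (k + (-1)) \<noteq> 2*k - 2*(k + (-1)) \<and> wc t1 t2 t3 t4 t5 (t2) (k + (-1)) \<noteq> 2*k + 2*l - 2*(k + (-1))"
      using W[of "t2" "k + (-1)"] by blast
    have i8: "0 \<le> t3 \<longrightarrow> t3 + (k + (-1)) \<le> 2*k \<longrightarrow> wc t1 t2 t3 t4 t5 (t3) (k + (-1)) \<noteq> 2*k - 2*(k + (-1)) \<and> wc t1 t2 t3 t4 t5 (t3) (k + (-1)) \<noteq> 2*k + 2*l - 2*(k + (-1))"
      using W[of "t3" "k + (-1)"] by blast
    have i9: "0 \<le> (1 + k) \<longrightarrow> (1 + k) + (k + (-1)) \<le> 2*k \<longrightarrow> wc t1 t2 t3 t4 t5 ((1 + k)) (k + (-1)) \<noteq> 2*k - 2*(k + (-1)) \<and> wc t1 t2 t3 t4 t5 ((1 + k)) (k + (-1)) \<noteq> 2*k + 2*l - 2*(k + (-1))"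
      using W[of "(1 + k)" "k + (-1)"] by blast
    have i10: "0 \<le> (1 + (- k) + t4) \<longrightarrow> (1 + (- k) + t4) + (k + (-1)) \<le> 2*k \<longrightarrow> wc t1 t2 t3 t4 t5 ((1 + (- k) + t4)) (k + (-1)) \<noteq> 2*k - 2*(k + (-1)) \<and> wc t1 t2 t3 t4 t5 ((1 + (- k) + t4)) (k + (-1)) \<noteq> 2*k + 2*l - 2*(k + (-1))"
      using W[of "(1 + (- k) + t4)" "k + (-1)"] by blast
    have i11: "0 \<le> (1 + (- k) + t3) \<longrightarrow> (1 + (- k) + t3) + (k + (-1)) \<le> 2*k \<longrightarrow> wc t1 t2 t3 t4 t5 ((1 + (- k) + t3)) (k + (-1)) \<noteq> 2*k - 2*(k + (-1)) \<and> wc t1 t2 t3 t4 t5 ((1 + (- k) + t3)) (k + (-1)) \<noteq> 2*k + 2*l - 2*(k + (-1))"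
      using W[of "(1 + (- k) + t3)" "k + (-1)"] by blast
    have i12: "0 \<le> (1 + (- k) + t2) \<longrightarrow> (1 + (- k) + t2) + (k + (-1)) \<le> 2*k \<longrightarrow> wc t1 t2 t3 t4 t5 ((1 + (- k) + t2)) (k + (-1)) \<noteq> 2*k - 2*(k + (-1)) \<and> wc t1 t2 t3 t4 t5 ((1 + (- k) + t2)) (k + (-1)) \<noteq> 2*k + 2*l - 2*(k + (-1))"
      using W[of "(1 + (- k) + t2)" "k + (-1)"] by blast
    have i13: "0 \<le> k \<longrightarrow> k + (k + (0)) \<le> 2*k \<longrightarrow> wc t1 t2 t3 t4 t5 (k) (k + (0)) \<noteq> 2*k - 2*(k + (0)) \<and> wc t1 t2 t3 t4 t5 (k) (k + (0)) \<noteq> 2*k + 2*l - 2*(k + (0))"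
      using W[of "k" "k + (0)"] by blast
    have i14: "0 \<le> 0 \<longrightarrow> 0 + (k + (0)) \<le> 2*k \<longrightarrow> wc t1 t2 t3 t4 t5 (0) (k + (0)) \<noteq> 2*k - 2*(k + (0)) \<and> wc t1 t2 t3 t4 t5 (0) (k + (0)) \<noteq> 2*k + 2*l - 2*(k + (0))"
      using W[of "0" "k + (0)"] by blast
    have i15: "0 \<le> t1 \<longrightarrow> t1 + (k + (0)) \<le> 2*k \<longrightarrow> wc t1 t2 t3 t4 t5 (t1) (k + (0)) \<noteq> 2*k - 2*(k + (0)) \<and> wc t1 t2 t3 t4 t5 (t1) (k + (0)) \<noteq> 2*k + 2*l - 2*(k + (0))"
      using W[of "t1" "k + (0)"] by blast
    have i16: "0 \<le> t3 \<longrightarrow> t3 + (k + (0)) \<le> 2*k \<longrightarrow> wc t1 t2 t3 t4 t5 (t3) (k + (0)) \<noteq> 2*k - 2*(k + (0)) \<and> wc t1 t2 t3 t4 t5 (t3) (k + (0)) \<noteq> 2*k + 2*l - 2*(k + (0))"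
      using W[of "t3" "k + (0)"] by blast
    have i17: "0 \<le> ((-1) + (- k) + t5) \<longrightarrow> ((-1) + (- k) + t5) + (k + (0)) \<le> 2*k \<longrightarrow> wc t1 t2 t3 t4 t5 (((-1) + (- k) + t5)) (k + (0)) \<noteq> 2*k - 2*(k + (0)) \<and> wc t1 t2 t3 t4 t5 (((-1) + (- k) + t5)) (k + (0)) \<noteq> 2*k + 2*l - 2*(k + (0))"
      using W[of "((-1) + (- k) + t5)" "k + (0)"] by blast
    have i18: "0 \<le> 0 \<longrightarrow> 0 + (k + (1)) \<le> 2*k \<longrightarrow> wc t1 t2 t3 t4 t5 (0) (k + (1)) \<noteq> 2*k - 2*(k + (1)) \<and> wc t1 t2 t3 t4 t5 (0) (k + (1)) \<noteq> 2*k + 2*l - 2*(k + (1))"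
      using W[of "0" "k + (1)"] by blast
    have i19: "0 \<le> t1 \<longrightarrow> t1 + (k + (1)) \<le> 2*k \<longrightarrow> wc t1 t2 t3 t4 t5 (t1) (k + (1)) \<noteq> 2*k - 2*(k + (1)) \<and> wc t1 t2 t3 t4 t5 (t1) (k + (1)) \<noteq> 2*k + 2*l - 2*(k + (1))"
      using W[of "t1" "k + (1)"] by blast
    have i20: "0 \<le> ((-1) + t2) \<longrightarrow> ((-1) + t2) + (k + (1)) \<le> 2*k \<longrightarrow> wc t1 t2 t3 t4 t5 (((-1) + t2)) (k + (1)) \<noteq> 2*k - 2*(k + (1)) \<and> wc t1 t2 t3 t4 t5 (((-1) + t2)) (k + (1)) \<noteq> 2*k + 2*l - 2*(k + (1))"
      using W[of "((-1) + t2)" "k + (1)"] by blast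
    have i21: "0 \<le> ((-1) + (- k) + t5) \<longrightarrow> ((-1) + (- k) + t5) + (k + (1)) \<le> 2*k \<longrightarrow> wc t1 t2 t3 t4 t5 (((-1) + (- k) + t5)) (k + (1)) \<noteq> 2*k - 2*(k + (1)) \<and> wc t1 t2 t3 t4 t5 (((-1) + (- k) + t5)) (k + (1)) \<noteq> 2*k + 2*l - 2*(k + (1))"
      using W[of "((-1) + (- k) + t5)" "k + (1)"] by blast
    have i22: "0 \<le> ((-1) + (- k) + t3) \<longrightarrow> ((-1) + (- k) + t3) + (k + (1)) \<le> 2*k \<longrightarrow> wc t1 t2 t3 t4 t5 (((-1) + (- k) + t3)) (k + (1)) \<noteq> 2*k - 2*(k + (1)) \<and> wc t1 t2 t3 t4 t5 (((-1) + (- k) + t3)) (k + (1)) \<noteq> 2*k + 2*l - 2*(k + (1))"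
      using W[of "((-1) + (- k) + t3)" "k + (1)"] by blast
    have i23: "0 \<le> ((-1) + (- k) + t4) \<longrightarrow> ((-1) + (- k) + t4) + (k + (1)) \<le> 2*k \<longrightarrow> wc t1 t2 t3 t4 t5 (((-1) + (- k) + t4)) (k + (1)) \<noteq> 2*k - 2*(k + (1)) \<and> wc t1 t2 t3 t4 t5 (((-1) + (- k) + t4)) (k + (1)) \<noteq> 2*k + 2*l - 2*(k + (1))"
      using W[of "((-1) + (- k) + t4)" "k + (1)"] by blast
    have i24: "0 \<le> ((-2) + (- k) + t5) \<longrightarrow> ((-2) + (- k) + t5) + (k + (1)) \<le> 2*k \<longrightarrow> wc t1 t2 t3 t4 t5 (((-2) + (- k) + t5)) (k + (1)) \<noteq> 2*k - 2*(k + (1)) \<and> wc t1 t2 t3 t4 t5 (((-2) + (- k) + t5)) (k + (1)) \<noteq> 2*k + 2*l - 2*(k + (1))"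
      using W[of "((-2) + (- k) + t5)" "k + (1)"] by blast
    have i25: "0 \<le> 0 \<longrightarrow> 0 + (k + (2)) \<le> 2*k \<longrightarrow> wc t1 t2 t3 t4 t5 (0) (k + (2)) \<noteq> 2*k - 2*(k + (2)) \<and> wc t1 t2 t3 t4 t5 (0) (k + (2)) \<noteq> 2*k + 2*l - 2*(k + (2))"
      using W[of "0" "k + (2)"] by blast
    have i26: "0 \<le> t1 \<longrightarrow> t1 + (k + (2)) \<le> 2*k \<longrightarrow> wc t1 t2 t3 t4 t5 (t1) (k + (2)) \<noteq> 2*k - 2*(k + (2)) \<and> wc t1 t2 t3 t4 t5 (t1) (k + (2)) \<noteq> 2*k + 2*l - 2*(k + (2))"
      using W[of "t1" "k + (2)"] by blast
    have i27: "0 \<le> ((-2) + k) \<longrightarrow> ((-2) + k) + (k + (2)) \<le> 2*k \<longrightarrow> wc t1 t2 t3 t4 t5 (((-2) + k)) (k + (2)) \<noteq> 2*k - 2*(k + (2)) \<and> wc t1 t2 t3 t4 t5 (((-2) + k)) (k + (2)) \<noteq> 2*k + 2*l - 2*(k + (2))"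
      using W[of "((-2) + k)" "k + (2)"] by blast
    have i28: "0 \<le> ((-1) + t5) \<longrightarrow> ((-1) + t5) + (k + (2)) \<le> 2*k \<longrightarrow> wc t1 t2 t3 t4 t5 (((-1) + t5)) (k + (2)) \<noteq> 2*k - 2*(k + (2)) \<and> wc t1 t2 t3 t4 t5 (((-1) + t5)) (k + (2)) \<noteq> 2*k + 2*l - 2*(k + (2))"
      using W[of "((-1) + t5)" "k + (2)"] by blast
    have i29: "0 \<le> ((-2) + (- k) + t4) \<longrightarrow> ((-2) + (- k) + t4) + (k + (2)) \<le> 2*k \<longrightarrow> wc t1 t2 t3 t4 t5 (((-2) + (- k) + t4)) (k + (2)) \<noteq> 2*k - 2*(k + (2)) \<and> wc t1 t2 t3 t4 t5 (((-2) + (- k) + t4)) (k + (2)) \<noteq> 2*k + 2*l - 2*(k + (2))"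
      using W[of "((-2) + (- k) + t4)" "k + (2)"] by blast
    have i30: "0 \<le> ((-2) + (- k) + t3) \<longrightarrow> ((-2) + (- k) + t3) + (k + (2)) \<le> 2*k \<longrightarrow> wc t1 t2 t3 t4 t5 (((-2) + (- k) + t3)) (k + (2)) \<noteq> 2*k - 2*(k + (2)) \<and> wc t1 t2 t3 t4 t5 (((-2) + (- k) + t3)) (k + (2)) \<noteq> 2*k + 2*l - 2*(k + (2))"
      using W[of "((-2) + (- k) + t3)" "k + (2)"] by blast
    have i31: "0 \<le> ((-2) + (- k) + t2) \<longrightarrow> ((-2) + (- k) + t2) + (k + (2)) \<le> 2*k \<longrightarrow> wc t1 t2 t3 t4 t5 (((-2) + (- k) + t2)) (k + (2)) \<noteq> 2*k - 2*(k + (2)) \<and> wc t1 t2 t3 t4 t5 (((-2) + (- k) + t2)) (k + (2)) \<noteq> 2*k + 2*l - 2*(k + (2))"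
      using W[of "((-2) + (- k) + t2)" "k + (2)"] by blast
    have i32: "0 \<le> ((-3) + (- k) + t5) \<longrightarrow> ((-3) + (- k) + t5) + (k + (2)) \<le> 2*k \<longrightarrow> wc t1 t2 t3 t4 t5 (((-3) + (- k) + t5)) (k + (2)) \<noteq> 2*k - 2*(k + (2)) \<and> wc t1 t2 t3 t4 t5 (((-3) + (- k) + t5)) (k + (2)) \<noteq> 2*k + 2*l - 2*(k + (2))"
      using W[of "((-3) + (- k) + t5)" "k + (2)"] by blast
    have i33: "0 \<le> ((-3) + (- k) + t3) \<longrightarrow> ((-3) + (- k) + t3) + (k + (2)) \<le> 2*k \<longrightarrow> wc t1 t2 t3 t4 t5 (((-3) + (- k) + t3)) (k + (2)) \<noteq> 2*k - 2*(k + (2)) \<and> wc t1 t2 t3 t4 t5 (((-3) + (- k) + t3)) (k + (2)) \<noteq> 2*k + 2*l - 2*(k + (2))"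
      using W[of "((-3) + (- k) + t3)" "k + (2)"] by blast
    show False using i0 i1 i2 i3 i4 i5 i6 i7 i8 i9 i10 i11 i12 i13 i14 i15 i16 i17 i18 i19 i20 i21 i22 i23 i24 i25 i26 i27 i28 i29 i30 i31 i32 i33 hk ht hE hl0 unfolding wc_def by (smt (verit))
  qed
  show False using hl c1 c2 c3 by blast
qed

lemma window_bound:
  fixes k l a :: int and A :: "int set"
  assumes indep: "dist_indep {1, 2*k, 2*k+2*l} A" and hl: "l=1 \<or> l=2 \<or> l=3" and hk: "l \<le> k"
  shows "int (card (A \<inter> {a..<a+4*k+2*l})) \<le> 2*k"
proof (rule ccontr)
  define F where "F = A \<inter> {a..<a+4*k+2*l}"
  define K where "K = nat k"
  have kK: "k = int K" using hk hl unfolding K_def by auto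
  assume "\<not> int (card (A \<inter> {a..<a+4*k+2*l})) \<le> 2*k"
  hence cF: "2*K < card F" unfolding F_def kK by simp
  have fin: "finite F" unfolding F_def by simp
  define xs where "xs = sorted_list_of_set F"
  have xs: "sorted_wrt (<) xs" "set xs = F" "length xs = card F"
    using fin sorted_list_of_set.strict_sorted_key_list_of_set[of F] unfolding xs_def by simp_all
  define p where "p i = xs ! i" for i
  have pF: "p i \<in> F" if "i \<le> 2*K" for i
    using that cF xs unfolding p_def by (metis le_less_trans nth_mem)
  have pA: "p i \<in> A" "a \<le> p i" "p i < a+4*k+2*l" if "i \<le> 2*K" for i
    using pF[OF that] unfolding F_def by auto
  have plt: "p i < p j" if "i < j" "j \<le> 2*K" for i j
    using sorted_wrt_nth_less[OF xs(1) that(1)] that cF xs(3) unfolding p_def by linarith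
  have pS: "p j - p i \<noteq> 1 \<and> p j - p i \<noteq> 2*k \<and> p j - p i \<noteq> 2*k+2*l" if "i < j" "j \<le> 2*K" for i j
  proof -
    have "p i \<in> A" "p j \<in> A" using pA that by auto
    hence "\<bar>p j - p i\<bar> \<notin> {1, 2*k, 2*k+2*l}" using indep unfolding dist_indep_def by blast
    moreover have "\<bar>p j - p i\<bar> = p j - p i" using plt[OF that] by simp
    ultimately show ?thesis by simp
  qed
  have pgap: "p j - p i \<ge> 2*(int j - int i)" if "i \<le> j" "j \<le> 2*K" for i j
    using that
  proof (induction j)
    case 0 thus ?case by simp
  next
    case (Suc j)
    show ?case
    proof (cases "i = Suc j")
      case True thus ?thesis by simp
    next
      case False
      hence "i \<le> j" using Suc by simp
      hence ih: "p j - p i \<ge> 2*(int j - int i)" using Suc by simp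
      have "p j < p (Suc j)" using plt[of j "Suc j"] Suc by simp
      moreover have "p (Suc j) - p j \<noteq> 1" using pS[of j "Suc j"] Suc by simp
      ultimately show ?thesis using ih by simp
    qed
  qed
  define Q where "Q i = p i - p 0 - 2 * int i" for i
  have Qmono: "Q i \<le> Q j" if "i \<le> j" "j \<le> 2*K" for i j
    using pgap[OF that] pgap[of 0 i] that unfolding Q_def by simp
  have Q0: "Q 0 = 0" unfolding Q_def by simp
  have QE: "Q (2*K) \<le> 2*l - 1"
    using pA[of 0] pA[of "2*K"] unfolding Q_def kK by simp
  define tau where "tau v = (if v \<le> Q (2*K) then int (LEAST i. v \<le> Q i) else 2*k+1)" for v
  have P: "tau v \<le> int j \<longleftrightarrow> v \<le> Q j" if "1 \<le> v" "j \<le> 2*K" for v j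
  proof (cases "v \<le> Q (2*K)")
    case True
    define m where "m = (LEAST i. v \<le> Q i)"
    have m1: "v \<le> Q m" using LeastI[of "\<lambda>i. v \<le> Q i", OF True] unfolding m_def .
    have m2: "m \<le> 2*K" using Least_le[of "\<lambda>i. v \<le> Q i", OF True] unfolding m_def .
    have t: "tau v = int m" unfolding tau_def m_def using True by simp
    show ?thesis
    proof
      assume "tau v \<le> int j"
      hence "m \<le> j" using t by simp
      thus "v \<le> Q j" using Qmono[of m j] m1 that by simp
    next
      assume "v \<le> Q j"
      hence "m \<le> j" unfolding m_def by (rule Least_le)
      thus "tau v \<le> int j" using t by simp
    qed
  next
    case False
    hence "tau v = 2*k+1" unfolding tau_def by simp
    moreover have "Q j \<le> Q (2*K)" using Qmono that by simp
    ultimately show ?thesis using False that kK by simp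
  qed
  have trange: "1 \<le> tau v \<and> tau v \<le> 2*k+1" if "1 \<le> v" for v
  proof -
    have "\<not> tau v \<le> 0" using P[of v 0] that Q0 by simp
    moreover have "tau v \<le> 2*k+1"
    proof (cases "v \<le> Q (2*K)")
      case True thus ?thesis using P[of v "2*K"] that kK by simp
    next
      case False thus ?thesis unfolding tau_def by simp
    qed
    ultimately show ?thesis by simp
  qed
  have tmono: "tau v \<le> tau (v+1)" if "1 \<le> v" for v
  proof (cases "tau (v+1) \<le> 2*k")
    case True
    define j where "j = nat (tau (v+1))"
    have j: "tau (v+1) = int j" "j \<le> 2*K" using True trange[of "v+1"] that kK unfolding j_def by auto
    have "v + 1 \<le> Q j" using P[of "v+1" j] j that by simp
    hence "v \<le> Q j" by simp
    hence "tau v \<le> int j" using P[of v j] j that by simp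
    thus ?thesis using j by simp
  next
    case False
    thus ?thesis using trange[of v] trange[of "v+1"] that by simp
  qed
  have Qrange: "0 \<le> Q j \<and> Q j \<le> 5" if "j \<le> 2*K" for j
    using Qmono[of 0 j] Qmono[of j "2*K"] that Q0 QE hl by auto
  have wcQ: "wc (tau 1) (tau 2) (tau 3) (tau 4) (tau 5) i L = Q (nat (i+L)) - Q (nat i)"
    if "0 \<le> i" "1 \<le> L" "i + L \<le> 2*k" for i L
  proof -
    define n where "n = nat i"
    define m where "m = nat (i+L)"
    have nm: "i = int n" "i + L = int m" "n \<le> 2*K" "m \<le> 2*K" "n \<le> m"
      using that kK unfolding n_def m_def by auto
    have h: "(i < tau v \<and> tau v \<le> i + L) \<longleftrightarrow> (\<not> v \<le> Q n \<and> v \<le> Q m)" if "1 \<le> v" for v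
      using P[of v n] P[of v m] nm that by auto
    have r: "0 \<le> Q n" "Q n \<le> Q m" "Q m \<le> 5" using Qrange nm Qmono by auto
    show ?thesis unfolding wc_def h[of 1, simplified] h[of 2, simplified] h[of 3, simplified]
      h[of 4, simplified] h[of 5, simplified] n_def[symmetric] m_def[symmetric]
      using r by (auto split: if_split)
  qed
  show False
  proof (rule tau_lemma[OF hl hk])
    show "1 \<le> tau 1" using trange[of 1] by simp
    show "tau 1 \<le> tau 2" using tmono[of 1] by simp
    show "tau 2 \<le> tau 3" using tmono[of 2] by simp
    show "tau 3 \<le> tau 4" using tmono[of 3] by simp
    show "tau 4 \<le> tau 5" using tmono[of 4] by simp
    show "tau 5 \<le> 2*k+1" using trange[of 5] by simp
    show "wc (tau 1) (tau 2) (tau 3) (tau 4) (tau 5) 0 (2*k) \<le> 2*l - 1"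
    proof -
      have "1 \<le> 2*k" using hk hl by auto
      hence "wc (tau 1) (tau 2) (tau 3) (tau 4) (tau 5) 0 (2*k) = Q (2*K) - Q 0"
        using wcQ[of 0 "2*k"] kK by (simp add: nat_mult_distrib)
      thus ?thesis using QE Q0 by simp
    qed
  next
    fix i L assume iL: "0 \<le> i" "i + L \<le> 2*k"
    show "wc (tau 1) (tau 2) (tau 3) (tau 4) (tau 5) i L \<noteq> 2*k - 2*L \<and> wc (tau 1) (tau 2) (tau 3) (tau 4) (tau 5) i L \<noteq> 2*k + 2*l - 2*L"
    proof (cases "L \<le> 0")
      case True
      hence "wc (tau 1) (tau 2) (tau 3) (tau 4) (tau 5) i L = 0" unfolding wc_def by auto
      thus ?thesis using True hk hl by auto
    next
      case False
      define n where "n = nat i"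
      define m where "m = nat (i+L)"
      have nm: "i = int n" "i + L = int m" "m \<le> 2*K" "n < m"
        using iL False kK unfolding n_def m_def by auto
      have "wc (tau 1) (tau 2) (tau 3) (tau 4) (tau 5) i L = p m - p n - 2*L"
        using wcQ[of i L] iL False nm unfolding Q_def n_def[symmetric] m_def[symmetric] by simp
      thus ?thesis using pS[of n m] nm by auto
    qed
  qed
qed


lemma limsup_le_bound:
  fixes f :: "nat \<Rightarrow> real" and c C :: real
  assumes "\<And>N. f N \<le> c + C / (2 * real N + 1)"
  shows "limsup (\<lambda>N. ereal (f N)) \<le> ereal c"
proof -
  have "limsup (\<lambda>N. ereal (f N)) \<le> limsup (\<lambda>N. ereal (c + C / (2 * real N + 1)))"
    by (rule Limsup_mono) (simp add: assms)
  also have "\<dots> = ereal c"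
  proof (rule lim_imp_Limsup)
    show "\<not> trivial_limit (sequentially :: nat filter)" by simp
    have "(\<lambda>N. c + C / (2 * real N + 1)) \<longlonglongrightarrow> c" by real_asymp
    thus "(\<lambda>N. ereal (c + C / (2 * real N + 1))) \<longlonglongrightarrow> ereal c" by (simp add: lim_ereal)
  qed
  finally show ?thesis .
qed

lemma limsup_ge_bound:
  fixes f :: "nat \<Rightarrow> real" and c C :: real
  assumes "\<And>N. c - C / (2 * real N + 1) \<le> f N"
  shows "ereal c \<le> limsup (\<lambda>N. ereal (f N))"
proof -
  have "ereal c = limsup (\<lambda>N. ereal (c - C / (2 * real N + 1)))"
  proof (rule lim_imp_Limsup[symmetric])
    show "\<not> trivial_limit (sequentially :: nat filter)" by simp
    have "(\<lambda>N. c - C / (2 * real N + 1)) \<longlonglongrightarrow> c" by real_asymp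
    thus "(\<lambda>N. ereal (c - C / (2 * real N + 1))) \<longlonglongrightarrow> ereal c" by (simp add: lim_ereal)
  qed
  also have "\<dots> \<le> limsup (\<lambda>N. ereal (f N))"
    by (rule Limsup_mono) (simp add: assms)
  finally show ?thesis .
qed

lemma multi_window:
  fixes A :: "int set" and a M B :: int
  assumes "\<And>x. int (card (A \<inter> {x..<x+M})) \<le> B" "0 \<le> M"
  shows "int (card (A \<inter> {a..<a + int m * M})) \<le> B * int m"
proof (induction m)
  case 0 thus ?case by simp
next
  case (Suc m)
  have "A \<inter> {a..<a + int (Suc m) * M} = (A \<inter> {a..<a + int m * M}) \<union> (A \<inter> {a + int m * M..<(a + int m * M) + M})"
  proof -
    have h: "0 \<le> M * int m" using assms(2) by simp
    show ?thesis
    proof (rule set_eqI)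
      fix x show "x \<in> A \<inter> {a..<a + int (Suc m) * M} \<longleftrightarrow> x \<in> (A \<inter> {a..<a + int m * M}) \<union> (A \<inter> {a + int m * M..<(a + int m * M) + M})"
        apply (simp add: algebra_simps) using h assms(2) by (smt (verit))
    qed
  qed
  hence "card (A \<inter> {a..<a + int (Suc m) * M}) \<le> card (A \<inter> {a..<a + int m * M}) + card (A \<inter> {a + int m * M..<(a + int m * M) + M})"
    by (simp add: card_Un_le)
  thus ?case using Suc assms(1)[of "a + int m * M"] by (simp add: algebra_simps)
qed

lemma upper_from_window:
  fixes A :: "int set" and M B :: int
  assumes w: "\<And>x. int (card (A \<inter> {x..<x+M})) \<le> B" and M: "0 < M"
  shows "upper_density A \<le> ereal (real_of_int B / real_of_int M)"
  unfolding upper_density_def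
proof (rule limsup_le_bound[where C = "real_of_int B"])
  fix N :: nat
  define m where "m = nat ((2 * int N + 1) div M) + 1"
  have B0: "0 \<le> B" using w[of 0] by linarith
  have m_eq: "int m = (2 * int N + 1) div M + 1" unfolding m_def using M by (simp add: pos_imp_zdiv_nonneg_iff)
  have d1: "(2 * int N + 1) div M * M + (2 * int N + 1) mod M = 2 * int N + 1" by simp
  have d2: "(2 * int N + 1) mod M < M" using M by simp
  have d3: "int m * M = (2 * int N + 1) div M * M + M" unfolding m_eq by (simp add: algebra_simps)
  have big: "2 * int N + 1 < int m * M" using d1 d2 d3 by linarith
  have sub: "A \<inter> {- int N..int N} \<subseteq> A \<inter> {- int N..<- int N + int m * M}" using big by auto
  have "int (card (A \<inter> {- int N..int N})) \<le> int (card (A \<inter> {- int N..<- int N + int m * M}))"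
    using card_mono[OF _ sub] by simp
  also have "\<dots> \<le> B * int m" using multi_window[OF w, of "- int N" m] M by simp
  finally have c1: "real (card (A \<inter> {- int N..int N})) \<le> real_of_int B * real m"
    by (metis of_int_le_iff of_int_mult of_int_of_nat_eq)
  have "real m = real_of_int ((2 * int N + 1) div M) + 1" using m_eq by (metis of_int_add of_int_of_nat_eq of_int_1)
  also have "\<dots> \<le> real_of_int (2 * int N + 1) / real_of_int M + 1" using real_of_int_div4[of "2 * int N + 1" M] by simp
  finally have c2: "real m \<le> (2 * real N + 1) / real_of_int M + 1" by simp
  have e: "real (card (A \<inter> {- int N..int N})) \<le> real_of_int B * ((2 * real N + 1) / real_of_int M + 1)"
    using c1 c2 B0 by (meson mult_left_mono of_int_0_le_iff order_trans)
  have p1: "real_of_int M > 0" using M by simp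
  have p2: "2 * real N + 1 > 0" by simp
  have eq: "real_of_int B * ((2 * real N + 1) / real_of_int M + 1) / (2 * real N + 1) = real_of_int B / real_of_int M + real_of_int B / (2 * real N + 1)"
    using p1 p2 by (simp add: field_simps)
  show "real (card (A \<inter> {- int N..int N})) / (2 * real N + 1) \<le> real_of_int B / real_of_int M + real_of_int B / (2 * real N + 1)"
    using divide_right_mono[OF e, of "2 * real N + 1"] p2 eq by simp
qed



definition Bset :: "int \<Rightarrow> int set" where
  "Bset k = (\<lambda>a. 2*a) ` {0..<k} \<union> (\<lambda>b. 2*k+1+2*b) ` {0..<k}"

definition A0 :: "int \<Rightarrow> int \<Rightarrow> int set" where
  "A0 k l = {x. x mod (4*k+2*l) \<in> Bset k}"

lemma card_Bset: assumes "0 \<le> k" shows "int (card (Bset k)) = 2*k"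
proof -
  have d: "(\<lambda>a. 2*a) ` {0..<k} \<inter> (\<lambda>b. 2*k+1+2*b) ` {0..<k} = {}" by auto
  have i1: "inj_on (\<lambda>a::int. 2*a) {0..<k}" by (auto simp: inj_on_def)
  have i2: "inj_on (\<lambda>b::int. 2*k+1+2*b) {0..<k}" by (auto simp: inj_on_def)
  have "card (Bset k) = card ((\<lambda>a. 2*a) ` {0..<k}) + card ((\<lambda>b. 2*k+1+2*b) ` {0..<k})"
    unfolding Bset_def by (rule card_Un_disjoint) (use d in auto)
  also have "\<dots> = 2 * nat k" using card_image[OF i1] card_image[OF i2] by simp
  finally show ?thesis using assms by simp
qed

lemma Bset_mem: "u \<in> Bset k \<longleftrightarrow> (\<exists>a. 0 \<le> a \<and> a < k \<and> u = 2*a) \<or> (\<exists>b. 0 \<le> b \<and> b < k \<and> u = 2*k+1+2*b)"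
  unfolding Bset_def by auto

lemma core:
  fixes k l z u w :: int
  assumes "1 \<le> l" "l \<le> k"
    and z: "z \<le> -2*(4*k+2*l) \<or> z = -(4*k+2*l) \<or> z = 0 \<or> z = 4*k+2*l \<or> z \<ge> 2*(4*k+2*l)"
    and u: "(\<exists>a. 0 \<le> a \<and> a < k \<and> u = 2*a) \<or> (\<exists>b. 0 \<le> b \<and> b < k \<and> u = 2*k+1+2*b)"
    and w: "(\<exists>a. 0 \<le> a \<and> a < k \<and> w = 2*a) \<or> (\<exists>b. 0 \<le> b \<and> b < k \<and> w = 2*k+1+2*b)"
    and d: "\<bar>z + u - w\<bar> \<in> {1, 2*k, 2*k+2*l}"
  shows False
  using assms by auto presburger+

lemma A0_indep:
  fixes k l :: int assumes "1 \<le> l" "l \<le> k"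
  shows "dist_indep {1, 2*k, 2*k+2*l} (A0 k l)"
  unfolding dist_indep_def
proof (intro ballI notI)
  fix x y assume x: "x \<in> A0 k l" and y: "y \<in> A0 k l" and d: "\<bar>x - y\<bar> \<in> {1, 2*k, 2*k+2*l}"
  define M where "M = 4*k+2*l"
  have M: "0 < M" using assms unfolding M_def by simp
  define q where "q = x div M - y div M"
  have xe: "x = M * (x div M) + x mod M" by simp
  have ye: "y = M * (y div M) + y mod M" by simp
  have xy: "x - y = M * q + x mod M - y mod M" unfolding q_def using xe ye by (simp add: algebra_simps)
  have qc: "q \<le> -2 \<or> q = -1 \<or> q = 0 \<or> q = 1 \<or> q \<ge> 2" by arith
  have z: "M*q \<le> -2*M \<or> M*q = -M \<or> M*q = 0 \<or> M*q = M \<or> M*q \<ge> 2*M"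
  proof -
    { assume "q \<le> -2" hence "M*q \<le> M*(-2)" using M by (intro mult_left_mono) auto hence ?thesis by simp }
    moreover { assume "q \<ge> 2" hence "M*2 \<le> M*q" using M by (intro mult_left_mono) auto hence ?thesis by simp }
    ultimately show ?thesis using qc by auto
  qed
  show False
    apply (rule core[of l k "M*q" "x mod M" "y mod M"])
    using assms z x y d xy unfolding M_def A0_def Bset_mem by auto
qed

lemma A0_aligned:
  fixes k l q :: int assumes "1 \<le> l" "l \<le> k"
  shows "int (card (A0 k l \<inter> {(4*k+2*l)*q..<(4*k+2*l)*q+(4*k+2*l)})) = 2*k"
proof -
  define M where "M = 4*k+2*l"
  have M: "0 < M" using assms unfolding M_def by simp
  have Bsub: "Bset k \<subseteq> {0..<M}" unfolding Bset_def M_def using assms by auto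
  have eq: "A0 k l \<inter> {M*q..<M*q+M} = (\<lambda>y. M*q + y) ` Bset k"
  proof (rule set_eqI)
    fix x
    show "x \<in> A0 k l \<inter> {M*q..<M*q+M} \<longleftrightarrow> x \<in> (\<lambda>y. M*q + y) ` Bset k"
    proof
      assume h: "x \<in> A0 k l \<inter> {M*q..<M*q+M}"
      have "x mod M = (x - M*q) mod M" by (simp add: mod_diff_eq[symmetric])
      also have "\<dots> = x - M*q" using h by (intro mod_pos_pos_trivial) auto
      finally have "x - M*q \<in> Bset k" using h unfolding A0_def M_def by auto
      thus "x \<in> (\<lambda>y. M*q + y) ` Bset k" by (intro image_eqI[of _ _ "x - M*q"]) auto
    next
      assume "x \<in> (\<lambda>y. M*q + y) ` Bset k"
      then obtain y where y: "y \<in> Bset k" "x = M*q + y" by auto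
      have yr: "0 \<le> y" "y < M" using y Bsub by auto
      have "x mod M = y" using y yr by (simp add: mod_pos_pos_trivial)
      thus "x \<in> A0 k l \<inter> {M*q..<M*q+M}" using y yr unfolding A0_def M_def by auto
    qed
  qed
  have "card ((\<lambda>y. M*q + y) ` Bset k) = card (Bset k)" by (rule card_image) (auto simp: inj_on_def)
  thus ?thesis using eq card_Bset[of k] assms unfolding M_def by simp
qed

lemma A0_multi:
  fixes k l q :: int assumes "1 \<le> l" "l \<le> k"
  shows "int (card (A0 k l \<inter> {(4*k+2*l)*q..<(4*k+2*l)*q + int m*(4*k+2*l)})) = 2*k*int m"
  using assms
proof (induction m arbitrary: q)
  case 0 thus ?case by simp
next
  case (Suc m)
  define M where "M = 4*k+2*l"
  have M: "0 < M" using Suc unfolding M_def by simp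
  have h: "0 \<le> M * int m" using M by simp
  have split: "A0 k l \<inter> {M*q..<M*q + int (Suc m)*M} = (A0 k l \<inter> {M*q..<M*q+M}) \<union> (A0 k l \<inter> {M*(q+1)..<M*(q+1) + int m*M})"
  proof (rule set_eqI)
    fix x show "x \<in> A0 k l \<inter> {M*q..<M*q + int (Suc m)*M} \<longleftrightarrow> x \<in> (A0 k l \<inter> {M*q..<M*q+M}) \<union> (A0 k l \<inter> {M*(q+1)..<M*(q+1) + int m*M})"
      apply (simp add: algebra_simps) using h M by (smt (verit))
  qed
  have disj: "(A0 k l \<inter> {M*q..<M*q+M}) \<inter> (A0 k l \<inter> {M*(q+1)..<M*(q+1) + int m*M}) = {}"
    by (auto simp: algebra_simps)
  have "card (A0 k l \<inter> {M*q..<M*q + int (Suc m)*M}) = card (A0 k l \<inter> {M*q..<M*q+M}) + card (A0 k l \<inter> {M*(q+1)..<M*(q+1) + int m*M})"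
    unfolding split by (rule card_Un_disjoint) (use disj in auto)
  thus ?case using Suc.IH[of "q+1"] A0_aligned[of l k q] Suc.prems unfolding M_def by (simp add: algebra_simps)
qed



lemma A0_lower:
  fixes k l :: int assumes "1 \<le> l" "l \<le> k"
  shows "ereal (real_of_int (2*k) / real_of_int (4*k+2*l)) \<le> upper_density (A0 k l)"
  unfolding upper_density_def
proof (rule limsup_ge_bound[where C = "6 * real_of_int k"])
  fix N :: nat
  define M where "M = 4*k+2*l"
  have M: "0 < M" using assms unfolding M_def by simp
  define t where "t = int N div M"
  have t0: "0 \<le> t" unfolding t_def using M by (simp add: pos_imp_zdiv_nonneg_iff)
  have tM: "t * M \<le> int N" unfolding t_def using M by (metis div_mult_mod_eq le_add_same_cancel1 pos_mod_sign)
  define m where "m = nat (2*t)"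
  have mi: "int m = 2*t" unfolding m_def using t0 by simp
  have sub: "A0 k l \<inter> {M*(-t)..<M*(-t) + int m*M} \<subseteq> A0 k l \<inter> {- int N..int N}"
    using tM mi by (auto simp: algebra_simps)
  have "2*k*int m = int (card (A0 k l \<inter> {M*(-t)..<M*(-t) + int m*M}))"
    using A0_multi[OF assms, of "-t" m] unfolding M_def by simp
  also have "\<dots> \<le> int (card (A0 k l \<inter> {- int N..int N}))" using card_mono[OF _ sub] by simp
  finally have "4*k*t \<le> int (card (A0 k l \<inter> {- int N..int N}))" using mi by (simp add: algebra_simps)
  hence "real_of_int (4*k*t) \<le> real_of_int (int (card (A0 k l \<inter> {- int N..int N})))" by (simp only: of_int_le_iff)
  hence c1: "4 * real_of_int k * real_of_int t \<le> real (card (A0 k l \<inter> {- int N..int N}))" by simp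
  have c2: "real N / real_of_int M - real_of_int t \<le> 1" using real_of_int_div3[of "int N" M] unfolding t_def by simp
  have Mr: "1 \<le> real_of_int M" using M by linarith
  have k0: "0 \<le> real_of_int k" using assms by simp
  have c3: "real_of_int (2*k) / real_of_int M \<le> 2 * real_of_int k"
  proof -
    have "real_of_int (2*k) / real_of_int M \<le> real_of_int (2*k) / 1"
      by (rule divide_left_mono) (use Mr k0 in auto)
    thus ?thesis by simp
  qed
  have "real N / real_of_int M \<le> real_of_int t + 1" using c2 by simp
  hence c4: "4 * real_of_int k * (real N / real_of_int M) \<le> 4 * real_of_int k * (real_of_int t + 1)"
    using k0 by (intro mult_left_mono) auto
  have e: "real_of_int (2*k) / real_of_int M * (2 * real N + 1) = 4 * real_of_int k * (real N / real_of_int M) + real_of_int (2*k) / real_of_int M"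
    using Mr by (simp add: field_simps)
  have "real_of_int (2*k) / real_of_int M * (2 * real N + 1) - 6 * real_of_int k \<le> real (card (A0 k l \<inter> {- int N..int N}))"
    using e c1 c3 c4 by (simp add: algebra_simps)
  hence dm: "(real_of_int (2*k) / real_of_int M * (2 * real N + 1) - 6 * real_of_int k) / (2 * real N + 1) \<le> real (card (A0 k l \<inter> {- int N..int N})) / (2 * real N + 1)"
    by (rule divide_right_mono) simp
  have p2: "2 * real N + 1 > 0" by simp
  have "(real_of_int (2*k) / real_of_int M * (2 * real N + 1) - 6 * real_of_int k) / (2 * real N + 1) = real_of_int (2*k) / real_of_int M - 6 * real_of_int k / (2 * real N + 1)"
    using p2 by (simp add: diff_divide_distrib)
  hence "real_of_int (2*k) / real_of_int M - 6 * real_of_int k / (2 * real N + 1) \<le> real (card (A0 k l \<inter> {- int N..int N})) / (2 * real N + 1)"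
    using dm by simp
  thus "real_of_int (2*k) / real_of_int (4*k+2*l) - 6 * real_of_int k / (2 * real N + 1) \<le> real (card (A0 k l \<inter> {- int N..int N})) / (2 * real N + 1)"
    unfolding M_def .
qed

theorem theorem31:
  fixes l k :: int
  assumes "1 \<le> l" and "l \<le> 3" and "l \<le> k"
  shows "indep_ratio {1, 2 * k, 2 * k + 2 * l} = ereal (real_of_int (2 * k) / real_of_int (4 * k + 2 * l))"
  unfolding indep_ratio_def
proof (rule antisym)
  have hl: "l = 1 \<or> l = 2 \<or> l = 3" using assms by auto
  show "(SUP A \<in> {A. dist_indep {1, 2 * k, 2 * k + 2 * l} A}. upper_density A) \<le> ereal (real_of_int (2 * k) / real_of_int (4 * k + 2 * l))"
  proof (rule SUP_least)
    fix A assume "A \<in> {A. dist_indep {1, 2 * k, 2 * k + 2 * l} A}"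
    hence ind: "dist_indep {1, 2 * k, 2 * k + 2 * l} A" by simp
    show "upper_density A \<le> ereal (real_of_int (2 * k) / real_of_int (4 * k + 2 * l))"
    proof (rule upper_from_window)
      fix x show "int (card (A \<inter> {x..<x + (4 * k + 2 * l)})) \<le> 2 * k"
        using window_bound[OF ind hl assms(3), of x] by (simp add: add.assoc)
    next
      show "0 < 4 * k + 2 * l" using assms by simp
    qed
  qed
next
  show "ereal (real_of_int (2 * k) / real_of_int (4 * k + 2 * l)) \<le> (SUP A \<in> {A. dist_indep {1, 2 * k, 2 * k + 2 * l} A}. upper_density A)"
    by (rule SUP_upper2[of "A0 k l"]) (use A0_indep[OF assms(1) assms(3)] A0_lower[OF assms(1) assms(3)] in auto)
qed


end
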